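(* Consider fair division instances with $n$ agents, $m$ divisible goods, additive valuations and generalized assignment constraints (constraints publicly known, valuations reported). Consider the mechanism: set $\mathcal{P}=\emptyset$; for $i=1,\dots,n$, let $q_i$ be the optimal value of the linear program in variables $\{x_{j,g}\}_{j\le i,g\in[m]}$ maximizing $v_i(x_i)$ subject to $x_{j,g}\ge0$, $\sum_{j\le i}x_{j,g}\le1$ for all $g$, $x_j$ feasible for $j$ for all $j\le i$, and all constraints in $\mathcal{P}$; then add the constraint $v_i(x_i)=q_i$ to $\mathcal{P}$. Finally output any $x=(x_1,\dots,x_n)$ with $x_{j,g}\ge0$, $\sum_{j}x_{j,g}\le1$, $x_j$ feasible for $j$ for all $j$, and satisfying all constraints in $\mathcal{P}$. This mechanism is truthful and always outputs a Pareto-optimal allocation.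
   Context: Additive valuations: $v_i(y)=\sum_g y_g v_{i,g}$, $v_{i,g}\ge0$, where $v_i$ is agent $i$'s reported valuation. Generalized assignment constraints: agent $i$ has sizes $s_i(g)\ge0$ and budget $B_i$; bundle $y$ is feasible for $i$ iff $\sum_g s_i(g)y_g\le B_i$. A feasible allocation $x$ is Pareto-optimal if no feasible allocation $z$ has $v_i(z_i)\ge v_i(x_i)$ for all $i$ with some inequality strict. A mechanism maps reported valuation profiles to feasible allocations; it is truthful if no agent can obtain a bundle of strictly higher true value by misreporting her valuation, for any reports of the other agents. *)

theory Defs
  imports Main "HOL-Analysis.Analysis"
begin

text \<open>Agents are 0,...,n-1, goods are 0,...,m-1.
  A valuation profile is v :: nat => nat => real (v i g = v_{i,g}),
  sizes s i g = s_i(g), budgets B i = B_i.\<close>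

definition bundle_val :: "nat \<Rightarrow> (nat \<Rightarrow> nat \<Rightarrow> real) \<Rightarrow> nat \<Rightarrow> (nat \<Rightarrow> real) \<Rightarrow> real" where
  "bundle_val m v i y = (\<Sum>g<m. y g * v i g)"

definition feasible_bundle :: "nat \<Rightarrow> (nat \<Rightarrow> nat \<Rightarrow> real) \<Rightarrow> (nat \<Rightarrow> real) \<Rightarrow> nat \<Rightarrow> (nat \<Rightarrow> real) \<Rightarrow> bool" where
  "feasible_bundle m s B i y \<longleftrightarrow> (\<Sum>g<m. s i g * y g) \<le> B i"

definition stage_region :: "nat \<Rightarrow> (nat \<Rightarrow> nat \<Rightarrow> real) \<Rightarrow> (nat \<Rightarrow> real) \<Rightarrow> nat \<Rightarrow> (nat \<Rightarrow> nat \<Rightarrow> real) \<Rightarrow> bool" where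
  "stage_region m s B i x \<longleftrightarrow>
     (\<forall>j\<le>i. \<forall>g<m. 0 \<le> x j g) \<and>
     (\<forall>g<m. (\<Sum>j\<le>i. x j g) \<le> 1) \<and>
     (\<forall>j\<le>i. feasible_bundle m s B j (x j))"

definition feasible_alloc :: "nat \<Rightarrow> nat \<Rightarrow> (nat \<Rightarrow> nat \<Rightarrow> real) \<Rightarrow> (nat \<Rightarrow> real) \<Rightarrow> (nat \<Rightarrow> nat \<Rightarrow> real) \<Rightarrow> bool" where
  "feasible_alloc n m s B x \<longleftrightarrow>
     (\<forall>j g. (n \<le> j \<or> m \<le> g) \<longrightarrow> x j g = 0) \<and>
     (\<forall>j<n. \<forall>g<m. 0 \<le> x j g) \<and>
     (\<forall>g<m. (\<Sum>j<n. x j g) \<le> 1) \<and>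
     (\<forall>j<n. feasible_bundle m s B j (x j))"

text \<open>opt_vals m s B v i = [q_0, ..., q_{i-1}]: the optimal LP values of the first i
  stages of the mechanism (the constraint set P after i stages).\<close>
primrec opt_vals :: "nat \<Rightarrow> (nat \<Rightarrow> nat \<Rightarrow> real) \<Rightarrow> (nat \<Rightarrow> real) \<Rightarrow> (nat \<Rightarrow> nat \<Rightarrow> real) \<Rightarrow> nat \<Rightarrow> real list" where
  "opt_vals m s B v 0 = []"
| "opt_vals m s B v (Suc i) =
     (let P = opt_vals m s B v i in
      P @ [Sup {bundle_val m v i (x i) | x. stage_region m s B i x \<and>
                  (\<forall>j<i. bundle_val m v j (x j) = P ! j)}])"

definition mech_outputs :: "nat \<Rightarrow> nat \<Rightarrow> (nat \<Rightarrow> nat \<Rightarrow> real) \<Rightarrow> (nat \<Rightarrow> real) \<Rightarrow> (nat \<Rightarrow> nat \<Rightarrow> real) \<Rightarrow> (nat \<Rightarrow> nat \<Rightarrow> real) set" where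
  "mech_outputs n m s B v =
     {x. feasible_alloc n m s B x \<and> (\<forall>j<n. bundle_val m v j (x j) = opt_vals m s B v n ! j)}"

definition valid_valuations :: "nat \<Rightarrow> nat \<Rightarrow> (nat \<Rightarrow> nat \<Rightarrow> real) \<Rightarrow> bool" where
  "valid_valuations n m v \<longleftrightarrow> (\<forall>i<n. \<forall>g<m. 0 \<le> v i g)"

definition pareto_optimal :: "nat \<Rightarrow> nat \<Rightarrow> (nat \<Rightarrow> nat \<Rightarrow> real) \<Rightarrow> (nat \<Rightarrow> real) \<Rightarrow> (nat \<Rightarrow> nat \<Rightarrow> real) \<Rightarrow> (nat \<Rightarrow> nat \<Rightarrow> real) \<Rightarrow> bool" where
  "pareto_optimal n m s B v x \<longleftrightarrow> feasible_alloc n m s B x \<and>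
     \<not> (\<exists>z. feasible_alloc n m s B z \<and>
            (\<forall>i<n. bundle_val m v i (x i) \<le> bundle_val m v i (z i)) \<and>
            (\<exists>i<n. bundle_val m v i (x i) < bundle_val m v i (z i)))"

definition truthful :: "nat \<Rightarrow> nat \<Rightarrow> ((nat \<Rightarrow> nat \<Rightarrow> real) \<Rightarrow> (nat \<Rightarrow> nat \<Rightarrow> real) set) \<Rightarrow> bool" where
  "truthful n m M \<longleftrightarrow>
     (\<forall>v v' i x y. valid_valuations n m v \<and> valid_valuations n m v' \<and> i < n \<and>
        (\<forall>j<n. j \<noteq> i \<longrightarrow> (\<forall>g<m. v' j g = v j g)) \<and>
        x \<in> M v \<and> y \<in> M v' \<longrightarrow>
        \<not> (bundle_val m v i (x i) < bundle_val m v i (y i)))"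

end

theory Submission
  imports Defs
begin

lemma compact_PiE_UNIV:
  fixes C :: "'a \<Rightarrow> 'b::topological_space set"
  assumes "\<And>i. compact (C i)"
  shows "compact (PiE UNIV C)"
proof -
  have "compactin (product_topology (\<lambda>i. euclidean) UNIV) (PiE UNIV C)"
    using assms by (simp add: compactin_PiE)
  then show ?thesis by (simp add: euclidean_product_topology)
qed

lemma cont_coord2 [continuous_intros]:
  "continuous_on S (\<lambda>x::'a \<Rightarrow> 'b \<Rightarrow> 'c::topological_space. x j g)"
proof -
  have "continuous_on UNIV (\<lambda>x::'a \<Rightarrow> 'b \<Rightarrow> 'c. x j)" by simp
  moreover have "continuous_on UNIV (\<lambda>y::'b \<Rightarrow> 'c. y g)" by simp
  ultimately have "continuous_on UNIV ((\<lambda>y::'b \<Rightarrow> 'c. y g) \<circ> (\<lambda>x::'a \<Rightarrow> 'b \<Rightarrow> 'c. x j))"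
    by (metis continuous_on_compose image_subset_iff_funcset continuous_on_subset subset_UNIV)
  then show ?thesis by (auto simp: o_def intro: continuous_on_subset)
qed

lemma closed_Collect_constimp: "closed {x. Q x} \<Longrightarrow> closed {x. P \<longrightarrow> Q x}"
  by (cases P) auto

definition box2 :: "nat \<Rightarrow> nat \<Rightarrow> (nat \<Rightarrow> nat \<Rightarrow> real) set" where
  "box2 k m = PiE UNIV (\<lambda>j. PiE UNIV (\<lambda>g. if j < k \<and> g < m then {0..1} else {0}))"

lemma compact_box2: "compact (box2 k m)"
  unfolding box2_def
  by (intro compact_PiE_UNIV) auto

lemma closed_CL: "closed {x::nat\<Rightarrow>nat\<Rightarrow>real. (\<forall>g<m. (\<Sum>j<k. x j g) \<le> 1) \<and> (\<forall>j<k. feasible_bundle m s B j (x j))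
    \<and> (\<forall>j<l. bundle_val m v j (x j) = c j)}"
  unfolding feasible_bundle_def bundle_val_def
  by (intro closed_Collect_conj closed_Collect_all closed_Collect_constimp closed_Collect_le closed_Collect_eq
      continuous_intros)

definition LPset where
  "LPset m s B v i = {bundle_val m v i (x i) | x. stage_region m s B i x \<and>
                  (\<forall>j<i. bundle_val m v j (x j) = opt_vals m s B v i ! j)}"

lemma length_opt_vals [simp]: "length (opt_vals m s B v k) = k"
  by (induction k) (auto simp: Let_def)

lemma opt_vals_Suc_nth: "opt_vals m s B v (Suc i) ! i = Sup (LPset m s B v i)"
  by (simp add: Let_def LPset_def nth_append)

lemma opt_vals_prefix: "j < i \<Longrightarrow> i \<le> k \<Longrightarrow> opt_vals m s B v k ! j = opt_vals m s B v i ! j"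
proof (induction k)
  case 0 then show ?case by simp
next
  case (Suc k)
  show ?case
  proof (cases "i = Suc k")
    case False
    then have "i \<le> k" using Suc by simp
    then show ?thesis using Suc by (simp add: Let_def nth_append)
  qed simp
qed

lemma bundle_val_cong: "(\<forall>g<m. v' i g = v i g) \<Longrightarrow> (\<forall>g<m. y g = y' g) \<Longrightarrow> bundle_val m v' i y = bundle_val m v i y'"
  unfolding bundle_val_def by (intro sum.cong) auto

lemma opt_vals_agree: "(\<forall>j<k. \<forall>g<m. v' j g = v j g) \<Longrightarrow> opt_vals m s B v' k = opt_vals m s B v k"
proof (induction k)
  case 0 then show ?case by simp
next
  case (Suc k)
  then have IH: "opt_vals m s B v' k = opt_vals m s B v k" by simp
  have bv: "\<And>j y. j < Suc k \<Longrightarrow> bundle_val m v' j y = bundle_val m v j y"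
    using Suc.prems by (intro bundle_val_cong) auto
  show ?case by (simp add: Let_def IH bv)
qed

lemma region_le1:
  assumes "stage_region m s B i x" "j \<le> i" "g < m"
  shows "x j g \<le> 1"
proof -
  have "x j g \<le> (\<Sum>j\<le>i. x j g)"
    using assms by (intro member_le_sum) (auto simp: stage_region_def)
  also have "\<dots> \<le> 1" using assms by (auto simp: stage_region_def)
  finally show ?thesis .
qed

lemma bdd_LPset:
  assumes "valid_valuations n m v" "i < n"
  shows "bdd_above (LPset m s B v i)"
proof (rule bdd_aboveI)
  fix a assume "a \<in> LPset m s B v i"
  then obtain x where x: "stage_region m s B i x" and a: "a = bundle_val m v i (x i)"
    by (auto simp: LPset_def)
  have "a = (\<Sum>g<m. x i g * v i g)" by (simp add: a bundle_val_def)
  also have "\<dots> \<le> (\<Sum>g<m. v i g)"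
  proof (intro sum_mono)
    fix g assume g: "g \<in> {..<m}"
    show "x i g * v i g \<le> v i g"
      using assms x g region_le1[OF x, of i g] by (intro mult_left_le_one_le) (auto simp: valid_valuations_def stage_region_def)
  qed
  finally show "a \<le> (\<Sum>g<m. v i g)" .
qed

lemma le_opt:
  assumes "valid_valuations n m v" "i < n" "stage_region m s B i x"
    "\<forall>j<i. bundle_val m v j (x j) = opt_vals m s B v i ! j"
  shows "bundle_val m v i (x i) \<le> opt_vals m s B v (Suc i) ! i"
  unfolding opt_vals_Suc_nth
  by (rule cSup_upper[OF _ bdd_LPset[OF assms(1,2)]]) (use assms in \<open>auto simp: LPset_def\<close>)

lemma feasible_stage:
  assumes "feasible_alloc n m s B x" "i < n"
  shows "stage_region m s B i x"
proof -
  have "\<forall>g<m. (\<Sum>j\<le>i. x j g) \<le> (\<Sum>j<n. x j g)"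
    using assms by (auto simp: feasible_alloc_def intro!: sum_mono2)
  then show ?thesis using assms by (fastforce simp: feasible_alloc_def stage_region_def)
qed


lemma feasible_alloc_box:
  "feasible_alloc k m s B x \<longleftrightarrow> x \<in> box2 k m \<and> (\<forall>g<m. (\<Sum>j<k. x j g) \<le> 1) \<and> (\<forall>j<k. feasible_bundle m s B j (x j))"
proof
  assume a: "feasible_alloc k m s B x"
  have "x \<in> box2 k m"
  proof -
    have "x j g \<le> 1" if "j < k" "g < m" for j g
    proof -
      have "x j g \<le> (\<Sum>j<k. x j g)"
        using a that by (intro member_le_sum) (auto simp: feasible_alloc_def)
      also have "\<dots> \<le> 1" using a that by (auto simp: feasible_alloc_def)
      finally show ?thesis .
    qed
    then show ?thesis using a unfolding box2_def feasible_alloc_def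
      by (auto simp: PiE_iff not_less)
  qed
  then show "x \<in> box2 k m \<and> (\<forall>g<m. (\<Sum>j<k. x j g) \<le> 1) \<and> (\<forall>j<k. feasible_bundle m s B j (x j))"
    using a by (auto simp: feasible_alloc_def)
next
  assume "x \<in> box2 k m \<and> (\<forall>g<m. (\<Sum>j<k. x j g) \<le> 1) \<and> (\<forall>j<k. feasible_bundle m s B j (x j))"
  then show "feasible_alloc k m s B x"
    unfolding box2_def feasible_alloc_def PiE_iff
    by (auto split: if_splits) (metis not_le)+
qed

lemma exists_stage:
  assumes val: "valid_valuations n m v" and Bn: "\<forall>i<n. 0 \<le> B i"
  shows "k \<le> n \<Longrightarrow> \<exists>x. feasible_alloc k m s B x \<and> (\<forall>j<k. bundle_val m v j (x j) = opt_vals m s B v k ! j)"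
proof (induction k)
  case 0
  have "feasible_alloc 0 m s B (\<lambda>_ _. 0)" by (simp add: feasible_alloc_def)
  then show ?case by blast
next
  case (Suc k)
  then obtain x where x: "feasible_alloc k m s B x" "\<forall>j<k. bundle_val m v j (x j) = opt_vals m s B v k ! j"
    by auto
  have kn: "k < n" using Suc by simp
  define S where "S = {y. feasible_alloc (Suc k) m s B y \<and> (\<forall>j<k. bundle_val m v j (y j) = opt_vals m s B v k ! j)}"
  have S_eq: "S = box2 (Suc k) m \<inter> {y. (\<forall>g<m. (\<Sum>j<Suc k. y j g) \<le> 1) \<and> (\<forall>j<Suc k. feasible_bundle m s B j (y j))
    \<and> (\<forall>j<k. bundle_val m v j (y j) = opt_vals m s B v k ! j)}"
    unfolding S_def feasible_alloc_box by auto
  have cS: "compact S" unfolding S_eq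
    by (intro compact_Int_closed compact_box2 closed_CL)
  have xk: "x k = (\<lambda>_. 0)" using x(1) by (auto simp: feasible_alloc_def)
  have "x \<in> S"
    using x Bn kn xk unfolding S_def feasible_alloc_def
    by (auto simp: less_Suc_eq feasible_bundle_def)
  then have Sne: "S \<noteq> {}" by auto
  have cont: "continuous_on S (\<lambda>y. bundle_val m v k (y k))"
    unfolding bundle_val_def by (intro continuous_intros)
  obtain y where yS: "y \<in> S" and ymax: "\<And>z. z \<in> S \<Longrightarrow> bundle_val m v k (z k) \<le> bundle_val m v k (y k)"
    using continuous_attains_sup[OF cS Sne cont] by blast
  have ysr: "stage_region m s B k y"
    using yS unfolding S_def by (intro feasible_stage) auto
  have "Sup (LPset m s B v k) = bundle_val m v k (y k)"
  proof (rule cSup_eq_maximum)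
    show "bundle_val m v k (y k) \<in> LPset m s B v k"
      using yS ysr unfolding LPset_def S_def by blast
  next
    fix a assume "a \<in> LPset m s B v k"
    then obtain w where w: "stage_region m s B k w" "\<forall>j<k. bundle_val m v j (w j) = opt_vals m s B v k ! j"
      and a: "a = bundle_val m v k (w k)" by (auto simp: LPset_def)
    define w' where "w' = (\<lambda>j g. if j \<le> k \<and> g < m then w j g else 0)"
    have bw: "bundle_val m v j (w' j) = bundle_val m v j (w j)" if "j \<le> k" for j
      using that by (intro bundle_val_cong) (auto simp: w'_def)
    have fw: "feasible_bundle m s B j (w' j) = feasible_bundle m s B j (w j)" if "j \<le> k" for j
      using that unfolding feasible_bundle_def by (intro arg_cong2[where f="(\<le>)"] sum.cong) (auto simp: w'_def)
    have sw: "(\<Sum>j<Suc k. w' j g) = (\<Sum>j\<le>k. w j g)" if "g < m" for g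
      using that lessThan_Suc_atMost by (auto simp: w'_def intro!: sum.cong)
    have "w' \<in> S"
      unfolding S_def feasible_alloc_def
      using w bw fw sw by (auto simp: w'_def stage_region_def less_Suc_eq_le)
    then show "a \<le> bundle_val m v k (y k)"
      using ymax bw[of k] a by fastforce
  qed
  then have "opt_vals m s B v (Suc k) ! k = bundle_val m v k (y k)"
    using opt_vals_Suc_nth[of m s B v k] by simp
  moreover have "\<forall>j<k. opt_vals m s B v (Suc k) ! j = opt_vals m s B v k ! j"
    by (simp add: Let_def nth_append)
  ultimately have "\<forall>j<Suc k. bundle_val m v j (y j) = opt_vals m s B v (Suc k) ! j"
    using yS unfolding S_def by (auto simp: less_Suc_eq)
  then show ?case using yS unfolding S_def by blast
qed


theorem theorem6:
  fixes n m :: nat and s :: "nat \<Rightarrow> nat \<Rightarrow> real" and B :: "nat \<Rightarrow> real"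
  assumes sizes_nonneg: "\<forall>i<n. \<forall>g<m. 0 \<le> s i g"
    and budgets_nonneg: "\<forall>i<n. 0 \<le> B i"
  shows "truthful n m (mech_outputs n m s B)
    \<and> (\<forall>v. valid_valuations n m v \<longrightarrow>
           mech_outputs n m s B v \<noteq> {} \<and>
           (\<forall>x \<in> mech_outputs n m s B v. pareto_optimal n m s B v x))"
proof (intro conjI allI impI)
  show "truthful n m (mech_outputs n m s B)"
    unfolding truthful_def
  proof (intro allI impI notI)
    fix v v' i x y
    assume A: "valid_valuations n m v \<and> valid_valuations n m v' \<and> i < n \<and>
        (\<forall>j<n. j \<noteq> i \<longrightarrow> (\<forall>g<m. v' j g = v j g)) \<and>
        x \<in> mech_outputs n m s B v \<and> y \<in> mech_outputs n m s B v'"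
      and lt: "bundle_val m v i (x i) < bundle_val m v i (y i)"
    have in_: "i < n" using A by simp
    have agree: "opt_vals m s B v' i = opt_vals m s B v i"
      using A by (intro opt_vals_agree) auto
    have cons: "\<forall>j<i. bundle_val m v j (y j) = opt_vals m s B v i ! j"
    proof (intro allI impI)
      fix j assume j: "j < i"
      have "bundle_val m v j (y j) = bundle_val m v' j (y j)"
        using A j by (intro bundle_val_cong) auto
      also have "\<dots> = opt_vals m s B v' n ! j"
        using A j by (auto simp: mech_outputs_def)
      also have "\<dots> = opt_vals m s B v' i ! j"
        using j in_ by (intro opt_vals_prefix) auto
      finally show "bundle_val m v j (y j) = opt_vals m s B v i ! j" using agree by simp
    qed
    have "bundle_val m v i (y i) \<le> opt_vals m s B v (Suc i) ! i"
      using A cons by (intro le_opt[where n=n] feasible_stage[where n=n]) (auto simp: mech_outputs_def)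
    also have "\<dots> = opt_vals m s B v n ! i"
      using in_ by (intro opt_vals_prefix[symmetric]) auto
    also have "\<dots> = bundle_val m v i (x i)"
      using A by (auto simp: mech_outputs_def)
    finally show False using lt by simp
  qed
next
  fix v assume val: "valid_valuations n m v"
  show "mech_outputs n m s B v \<noteq> {}"
    using exists_stage[OF val budgets_nonneg, of n] by (auto simp: mech_outputs_def)
next
  fix v assume val: "valid_valuations n m v"
  show "\<forall>x \<in> mech_outputs n m s B v. pareto_optimal n m s B v x"
  proof
    fix x assume x: "x \<in> mech_outputs n m s B v"
    show "pareto_optimal n m s B v x"
      unfolding pareto_optimal_def
    proof (intro conjI notI)
      show "feasible_alloc n m s B x" using x by (simp add: mech_outputs_def)
    next
      assume "\<exists>z. feasible_alloc n m s B z \<and>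
            (\<forall>i<n. bundle_val m v i (x i) \<le> bundle_val m v i (z i)) \<and>
            (\<exists>i<n. bundle_val m v i (x i) < bundle_val m v i (z i))"
      then obtain z where z: "feasible_alloc n m s B z"
        "\<forall>i<n. bundle_val m v i (x i) \<le> bundle_val m v i (z i)"
        and ex: "\<exists>i. i < n \<and> bundle_val m v i (x i) < bundle_val m v i (z i)" by auto
      define k where "k = (LEAST i. i < n \<and> bundle_val m v i (x i) < bundle_val m v i (z i))"
      have k: "k < n" "bundle_val m v k (x k) < bundle_val m v k (z k)"
        using LeastI_ex[OF ex] unfolding k_def by auto
      have kmin: "\<not> (bundle_val m v j (x j) < bundle_val m v j (z j))" if "j < k" for j
        using not_less_Least[of j "\<lambda>i. i < n \<and> bundle_val m v i (x i) < bundle_val m v i (z i)"] that k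
        unfolding k_def by auto
      have cons: "\<forall>j<k. bundle_val m v j (z j) = opt_vals m s B v k ! j"
      proof (intro allI impI)
        fix j assume j: "j < k"
        have "bundle_val m v j (z j) = bundle_val m v j (x j)"
        proof -
          have "bundle_val m v j (x j) \<le> bundle_val m v j (z j)" using z(2) j k by simp
          then show ?thesis using kmin[OF j] by linarith
        qed
        also have "\<dots> = opt_vals m s B v n ! j" using x j k by (auto simp: mech_outputs_def)
        also have "\<dots> = opt_vals m s B v k ! j" using j k by (intro opt_vals_prefix) auto
        finally show "bundle_val m v j (z j) = opt_vals m s B v k ! j" .
      qed
      have "bundle_val m v k (z k) \<le> opt_vals m s B v (Suc k) ! k"
        using k z cons val by (intro le_opt[where n=n] feasible_stage[where n=n]) auto
      also have "\<dots> = opt_vals m s B v n ! k"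
        using k by (intro opt_vals_prefix[symmetric]) auto
      also have "\<dots> = bundle_val m v k (x k)"
        using x k by (auto simp: mech_outputs_def)
      finally show False using k by simp
    qed
  qed
qed

end
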